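(* Let $p$, $n$, $b_1,\dots,b_n$, $h$, $b$, $\mathfrak{b}$, $\mathfrak{a}$, $d$, $D$, $H$ be as in the context. For each $s\in\mathbb{S}_{p^n}$, the equation $u+\mathfrak{a}(t)=p^n-1+s$ gives a bijection from $\{t\in\mathbb{S}_{p^n}(h):\mathfrak{a}(t)\succeq s\}$ to $\{u\in\mathbb{S}_{p^n}:u\succeq s\}$, with inverse $t=H(u-s,b)$. Furthermore, if $u$ corresponds to $t$ under this bijection, then $H(s,t)=H(u,b)$ and $D(s,t)=d(u)-d(u-s)$.
   Context: Let $p$ be a prime, $n\ge1$, $\mathbb{S}_{p^n}=\{0,\dots,p^n-1\}$; write $s\in\mathbb{S}_{p^n}$ as $s=\sum_{i=1}^n s_{(n-i)}p^{n-i}$ with digits in $\{0,\dots,p-1\}$, and $s\preceq t$ means $s_{(n-i)}\le t_{(n-i)}$ for all $i$. Let $b_1,\dots,b_n$ be integers prime to $p$, $\mathfrak{b}(s)=\sum_i s_{(n-i)}p^{n-i}b_i$, and for $t\in\mathbb{Z}$ let $\mathfrak{a}(t)\in\mathbb{S}_{p^n}$ be the unique element with $\mathfrak{b}(\mathfrak{a}(t))\equiv-t\pmod{p^n}$. Let $r:\mathbb{Z}\to\mathbb{S}_{p^n}$ be reduction mod $p^n$. Fix $h\in\mathbb{Z}$, let $\mathbb{S}_{p^n}(h)=\{t\in\mathbb{Z}:h\le t<h+p^n\}$, and let $b\in\mathbb{S}_{p^n}(h)$ be the unique element with $\mathfrak{a}(b)=p^n-1$. For $s\in\mathbb{S}_{p^n}$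 and $t\in\mathbb{S}_{p^n}(h)$ define $D(s,t)=\lfloor(\mathfrak{b}(s)+t-h)/p^n\rfloor$, $H(s,t)=h+r(\mathfrak{b}(s)+t-h)$, and $d(s)=D(s,b)$. *)

theory Defs
  imports "HOL-Number_Theory.Cong"
begin

definition digit :: "nat \<Rightarrow> nat \<Rightarrow> int \<Rightarrow> int" where
  "digit p k s = (s div (int p) ^ k) mod int p"

definition preceq :: "nat \<Rightarrow> nat \<Rightarrow> int \<Rightarrow> int \<Rightarrow> bool" where
  "preceq p n s t \<longleftrightarrow> (\<forall>k<n. digit p k s \<le> digit p k t)"

definition frakb :: "nat \<Rightarrow> nat \<Rightarrow> (nat \<Rightarrow> int) \<Rightarrow> int \<Rightarrow> int" where
  "frakb p n bs s = (\<Sum>i=1..n. digit p (n - i) s * (int p) ^ (n - i) * bs i)"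

definition fraka :: "nat \<Rightarrow> nat \<Rightarrow> (nat \<Rightarrow> int) \<Rightarrow> int \<Rightarrow> int" where
  "fraka p n bs t = (THE a. 0 \<le> a \<and> a < (int p) ^ n \<and> [frakb p n bs a = - t] (mod (int p) ^ n))"

definition belt :: "nat \<Rightarrow> nat \<Rightarrow> (nat \<Rightarrow> int) \<Rightarrow> int \<Rightarrow> int" where
  "belt p n bs h = (THE t. h \<le> t \<and> t < h + (int p) ^ n \<and> fraka p n bs t = (int p) ^ n - 1)"

definition DD :: "nat \<Rightarrow> nat \<Rightarrow> (nat \<Rightarrow> int) \<Rightarrow> int \<Rightarrow> int \<Rightarrow> int \<Rightarrow> int" where
  "DD p n bs h s t = (frakb p n bs s + t - h) div (int p) ^ n"

definition HH :: "nat \<Rightarrow> nat \<Rightarrow> (nat \<Rightarrow> int) \<Rightarrow> int \<Rightarrow> int \<Rightarrow> int \<Rightarrow> int" where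
  "HH p n bs h s t = h + (frakb p n bs s + t - h) mod (int p) ^ n"

definition dd :: "nat \<Rightarrow> nat \<Rightarrow> (nat \<Rightarrow> int) \<Rightarrow> int \<Rightarrow> int \<Rightarrow> int" where
  "dd p n bs h s = DD p n bs h s (belt p n bs h)"

end

theory Submission
  imports Defs
begin

lemma digit_bounds: "p > 0 \<Longrightarrow> 0 \<le> digit p k x \<and> digit p k x < int p"
  unfolding digit_def by simp

lemma digit_0: "digit p 0 x = x mod int p"
  unfolding digit_def by simp

lemma digit_Suc: "digit p (Suc k) x = digit p k (x div int p)"
  unfolding digit_def by (simp add: zdiv_zmult2_eq)

lemma sum_digits:
  assumes "p > 0" "\<forall>k<m. 0 \<le> e k \<and> e k < int p"
  shows "0 \<le> (\<Sum>k<m. e k * int p ^ k) \<and> (\<Sum>k<m. e k * int p ^ k) < int p ^ m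
    \<and> (\<forall>j<m. digit p j (\<Sum>k<m. e k * int p ^ k) = e j)"
  using assms(2)
proof (induction m arbitrary: e)
  case 0 then show ?case by simp
next
  case (Suc m)
  define r where "r = (\<Sum>k<m. e (Suc k) * int p ^ k)"
  have IH: "0 \<le> r \<and> r < int p ^ m \<and> (\<forall>j<m. digit p j r = e (Suc j))"
    unfolding r_def using Suc.IH[of "\<lambda>k. e (Suc k)"] Suc.prems by auto
  have x: "(\<Sum>k<Suc m. e k * int p ^ k) = e 0 + int p * r"
    unfolding r_def by (simp add: sum.lessThan_Suc_shift sum_distrib_left algebra_simps del: sum.lessThan_Suc)
  have e0: "0 \<le> e 0" "e 0 < int p" using Suc.prems by auto
  have m: "(e 0 + int p * r) mod int p = e 0" using e0 by simp
  have d: "(e 0 + int p * r) div int p = r" using e0 assms(1) by simp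
  have b1: "0 \<le> e 0 + int p * r" using IH e0 assms by simp
  have "r \<le> int p ^ m - 1" using IH by simp
  then have "int p * r \<le> int p * (int p ^ m - 1)" using assms by (intro mult_left_mono) auto
  then have b2: "e 0 + int p * r < int p ^ Suc m" using e0 by (simp add: algebra_simps)
  have dg: "\<forall>j<Suc m. digit p j (e 0 + int p * r) = e j"
  proof (intro allI impI)
    fix j assume "j < Suc m"
    then show "digit p j (e 0 + int p * r) = e j"
      by (cases j) (auto simp: digit_0 digit_Suc m d IH e0)
  qed
  show ?case using b1 b2 dg by (simp only: x)
qed

lemma decomp:
  assumes "p > 0" "0 \<le> x" "x < int p ^ m"
  shows "x = (\<Sum>k<m. digit p k x * int p ^ k)"
  using assms(2,3)
proof (induction m arbitrary: x)
  case 0 then show ?case by simp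
next
  case (Suc m)
  have e: "x div int p * int p = x - x mod int p" by (simp add: minus_mod_eq_div_mult)
  have "0 \<le> x mod int p" using assms(1) by simp
  moreover have "x < int p ^ m * int p" using Suc.prems(2) by (simp add: mult.commute)
  ultimately have "x div int p * int p < int p ^ m * int p" using e by linarith
  then have "x div int p < int p ^ m" using assms(1) by simp
  then have IH: "x div int p = (\<Sum>k<m. digit p k (x div int p) * int p ^ k)"
    using Suc.IH[of "x div int p"] Suc.prems(1) assms(1) by (simp add: pos_imp_zdiv_nonneg_iff)
  have "x = x mod int p + int p * (x div int p)" by simp
  also have "\<dots> = (\<Sum>k<Suc m. digit p k x * int p ^ k)"
    apply (subst IH)
    by (simp add: sum.lessThan_Suc_shift sum_distrib_left algebra_simps digit_0 digit_Suc del: sum.lessThan_Suc)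
  finally show ?case .
qed

lemma div_bound:
  assumes "int p > 0" "x < int p ^ Suc m"
  shows "x div int p < int p ^ m"
proof -
  have e: "x div int p * int p = x - x mod int p" by (simp add: minus_mod_eq_div_mult)
  have "0 \<le> x mod int p" using assms(1) by simp
  moreover have "x < int p ^ m * int p" using assms(2) by (simp add: mult.commute)
  ultimately have "x div int p * int p < int p ^ m * int p" using e by linarith
  then show ?thesis using assms(1) by simp
qed

definition F :: "nat \<Rightarrow> nat \<Rightarrow> (nat \<Rightarrow> int) \<Rightarrow> int \<Rightarrow> int" where
  "F p m c x = (\<Sum>k<m. digit p k x * int p ^ k * c k)"

lemma F_Suc: "F p (Suc m) c x = x mod int p * c 0 + int p * F p m (\<lambda>k. c (Suc k)) (x div int p)"
  unfolding F_def
  by (simp add: sum.lessThan_Suc_shift sum_distrib_left algebra_simps digit_0 digit_Suc del: sum.lessThan_Suc)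

lemma F_inj:
  assumes "prime p" "\<forall>k<m. coprime (c k) (int p)"
    "0 \<le> x" "x < int p ^ m" "0 \<le> y" "y < int p ^ m"
    "F p m c x mod int p ^ m = F p m c y mod int p ^ m"
  shows "x = y"
  using assms(2-)
proof (induction m arbitrary: c x y)
  case 0 then show ?case by simp
next
  case (Suc m)
  have p0: "int p > 0" using assms(1) prime_gt_0_nat by auto
  have pr: "prime (int p)" using assms(1) by simp
  define x' where "x' = x div int p"
  define y' where "y' = y div int p"
  define c' where "c' = (\<lambda>k. c (Suc k))"
  have "int p ^ Suc m dvd F p (Suc m) c x - F p (Suc m) c y"
    using Suc.prems(6) by (simp add: mod_eq_dvd_iff)
  then have D: "int p * int p ^ m dvd (x mod int p - y mod int p) * c 0 + int p * (F p m c' x' - F p m c' y')"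
    unfolding F_Suc x'_def y'_def c'_def by (simp add: algebra_simps)
  then have "int p dvd (x mod int p - y mod int p) * c 0 + int p * (F p m c' x' - F p m c' y')"
    using dvd_mult_left by blast
  then have "int p dvd (x mod int p - y mod int p) * c 0"
    by (simp add: dvd_add_left_iff)
  moreover have "coprime (int p) (c 0)" using Suc.prems(1) by (simp add: coprime_commute)
  ultimately have "int p dvd (x mod int p - y mod int p)"
    using coprime_dvd_mult_left_iff by blast
  moreover have AB: "\<bar>x mod int p - y mod int p\<bar> < int p"
  proof -
    have "0 \<le> x mod int p" "x mod int p < int p" "0 \<le> y mod int p" "y mod int p < int p" using p0 by simp_all
    then show ?thesis unfolding abs_less_iff by linarith
  qed
  ultimately have xy0: "x mod int p = y mod int p"
  proof -
    assume dv: "int p dvd (x mod int p - y mod int p)"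
    show ?thesis
    proof (rule ccontr)
      assume "x mod int p \<noteq> y mod int p"
      then have "x mod int p - y mod int p \<noteq> 0" by simp
      from dvd_imp_le_int[OF this dv] have "int p \<le> \<bar>x mod int p - y mod int p\<bar>" by simp
      then show False using AB by simp
    qed
  qed
  then have "int p * int p ^ m dvd int p * (F p m c' x' - F p m c' y')" using D by simp
  then have "int p ^ m dvd F p m c' x' - F p m c' y'" using p0 by simp
  then have "F p m c' x' mod int p ^ m = F p m c' y' mod int p ^ m" by (simp add: mod_eq_dvd_iff)
  moreover have "0 \<le> x'" "0 \<le> y'" using Suc.prems p0 unfolding x'_def y'_def by (simp_all add: pos_imp_zdiv_nonneg_iff)
  moreover have "x' < int p ^ m" "y' < int p ^ m"
    using Suc.prems p0 unfolding x'_def y'_def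
    by (simp_all add: div_bound)
  moreover have "\<forall>k<m. coprime (c' k) (int p)" using Suc.prems(1) unfolding c'_def by simp
  ultimately have "x' = y'" using Suc.IH by blast
  then show ?case using xy0 unfolding x'_def y'_def
    by (metis div_mult_mod_eq)
qed

lemma frakb_F: "frakb p n bs x = F p n (\<lambda>k. bs (n - k)) x"
  unfolding frakb_def F_def
  by (rule sum.reindex_bij_witness[of _ "\<lambda>k. n - k" "\<lambda>i. n - i"]) auto

lemma fraka_ex:
  assumes "prime p" "\<forall>i\<in>{1..n}. coprime (bs i) (int p)"
  shows "\<exists>!a. 0 \<le> a \<and> a < int p ^ n \<and> [frakb p n bs a = - t] (mod int p ^ n)"
proof -
  define P where "P = int p ^ n"
  have p0: "int p > 0" using assms(1) prime_gt_0_nat by auto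
  then have P0: "P > 0" unfolding P_def by simp
  define g where "g a = frakb p n bs a mod P" for a
  define A where "A = {0..<P}"
  have cop: "\<forall>k<n. coprime (bs (n - k)) (int p)" using assms(2) by auto
  have inj: "inj_on g A"
  proof (rule inj_onI)
    fix x y assume "x \<in> A" "y \<in> A" "g x = g y"
    then show "x = y" using F_inj[OF assms(1) cop, of x y] unfolding A_def g_def P_def frakb_F by auto
  qed
  have sub: "g ` A \<subseteq> A" unfolding g_def A_def using P0 by auto
  have eq: "g ` A = A" using endo_inj_surj[OF _ sub inj] unfolding A_def by simp
  have "(- t) mod P \<in> A" unfolding A_def using P0 by simp
  then obtain a where a: "a \<in> A" "g a = (- t) mod P" using eq by (metis imageE)
  show ?thesis
  proof (rule ex1I[of _ a])
    show "0 \<le> a \<and> a < int p ^ n \<and> [frakb p n bs a = - t] (mod int p ^ n)"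
      using a unfolding A_def g_def P_def cong_def by auto
  next
    fix b assume "0 \<le> b \<and> b < int p ^ n \<and> [frakb p n bs b = - t] (mod int p ^ n)"
    then have "b \<in> A" "g b = g a" using a unfolding A_def g_def P_def cong_def by auto
    then show "b = a" using inj a(1) by (meson inj_onD)
  qed
qed

lemma fraka_prop:
  assumes "prime p" "\<forall>i\<in>{1..n}. coprime (bs i) (int p)"
  shows "0 \<le> fraka p n bs t \<and> fraka p n bs t < int p ^ n \<and> [frakb p n bs (fraka p n bs t) = - t] (mod int p ^ n)"
  unfolding fraka_def using theI'[OF fraka_ex[OF assms, of t]] .

lemma fraka_unique:
  assumes "prime p" "\<forall>i\<in>{1..n}. coprime (bs i) (int p)"
    "0 \<le> a" "a < int p ^ n" "[frakb p n bs a = - t] (mod int p ^ n)"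
  shows "fraka p n bs t = a"
  unfolding fraka_def using the1_equality[OF fraka_ex[OF assms(1,2), of t]] assms(3-) by blast

lemma window_eq:
  fixes P h t1 t2 :: int
  assumes "h \<le> t1" "t1 < h + P" "h \<le> t2" "t2 < h + P" "[t1 = t2] (mod P)"
  shows "t1 = t2"
proof (rule ccontr)
  assume "t1 \<noteq> t2"
  then have "t1 - t2 \<noteq> 0" by simp
  moreover have "P dvd t1 - t2" using assms(5) by (simp add: cong_iff_dvd_diff)
  ultimately have "\<bar>P\<bar> \<le> \<bar>t1 - t2\<bar>" by (rule dvd_imp_le_int)
  then show False using assms(1-4) by linarith
qed

lemma belt_prop:
  assumes "prime p" "\<forall>i\<in>{1..n}. coprime (bs i) (int p)"
  shows "h \<le> belt p n bs h \<and> belt p n bs h < h + int p ^ n \<and> fraka p n bs (belt p n bs h) = int p ^ n - 1"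
proof -
  define P where "P = int p ^ n"
  have p0: "int p > 0" using assms(1) prime_gt_0_nat by auto
  then have P0: "P > 0" unfolding P_def by simp
  define t0 where "t0 = h + ((- frakb p n bs (P - 1)) - h) mod P"
  have w0: "h \<le> t0" "t0 < h + P" unfolding t0_def using P0 by simp_all
  have "[t0 = - frakb p n bs (P - 1)] (mod P)" unfolding t0_def cong_def mod_add_right_eq
    by simp
  then have "[frakb p n bs (P - 1) = - t0] (mod P)"
    by (metis cong_minus_minus_iff minus_minus cong_sym)
  then have f0: "fraka p n bs t0 = P - 1"
    using fraka_unique[OF assms, of "P - 1" t0] P0 unfolding P_def by simp
  have "\<exists>!t. h \<le> t \<and> t < h + P \<and> fraka p n bs t = P - 1"
  proof (rule ex1I[of _ t0])
    show "h \<le> t0 \<and> t0 < h + P \<and> fraka p n bs t0 = P - 1" using w0 f0 by simp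
  next
    fix t assume t: "h \<le> t \<and> t < h + P \<and> fraka p n bs t = P - 1"
    have c1: "[frakb p n bs (P - 1) = - t] (mod P)" using fraka_prop[OF assms, of t] t unfolding P_def by simp
    have c2: "[frakb p n bs (P - 1) = - t0] (mod P)" using fraka_prop[OF assms, of t0] f0 unfolding P_def by simp
    have "[- t = - t0] (mod P)" using c1 c2 by (meson cong_sym cong_trans)
    then have "[t = t0] (mod P)" by (simp add: cong_minus_minus_iff)
    then show "t = t0" using window_eq[of h t P t0] t w0 by simp
  qed
  then show ?thesis unfolding belt_def P_def by (rule theI')
qed

lemma geom: "(\<Sum>k<m. (int p - 1) * int p ^ k) = int p ^ m - 1"
proof (induction m)
  case 0 then show ?case by simp
next
  case (Suc m)
  have "(\<Sum>k<Suc m. (int p - 1) * int p ^ k) = (int p ^ m - 1) + (int p - 1) * int p ^ m"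
    using Suc by simp
  also have "\<dots> = int p ^ Suc m - 1" by (simp add: algebra_simps)
  finally show ?case .
qed

lemma frakb_V':
  assumes "p > 0" "\<forall>k<n. 0 \<le> e k \<and> e k < int p"
  shows "frakb p n bs (\<Sum>k<n. e k * int p ^ k) = (\<Sum>k<n. e k * int p ^ k * bs (n - k))"
proof -
  have d: "\<forall>j<n. digit p j (\<Sum>k<n. e k * int p ^ k) = e j" using sum_digits[OF assms] by blast
  show ?thesis unfolding frakb_F F_def by (rule sum.cong) (simp_all add: d)
qed

lemma SYM:
  assumes p0: "p > 0" and x: "0 \<le> x" "x < int p ^ n" and s: "0 \<le> s" "s < int p ^ n"
    and pr: "preceq p n s x"
  shows "0 \<le> int p ^ n - 1 + s - x \<and> int p ^ n - 1 + s - x < int p ^ n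
    \<and> preceq p n s (int p ^ n - 1 + s - x)
    \<and> frakb p n bs (int p ^ n - 1 + s - x) = frakb p n bs s + frakb p n bs (int p ^ n - 1) - frakb p n bs x
    \<and> frakb p n bs (int p ^ n - 1 + s - x - s) = frakb p n bs (int p ^ n - 1) - frakb p n bs x"
proof -
  define dx where "dx k = digit p k x" for k
  define ds where "ds k = digit p k s" for k
  define ey where "ey k = int p - 1 - dx k + ds k" for k
  define ez where "ez k = int p - 1 - dx k" for k
  define one where "one k = int p - 1" for k :: nat
  have bx: "\<forall>k<n. 0 \<le> dx k \<and> dx k < int p" unfolding dx_def using digit_bounds[OF p0] by blast
  have bs': "\<forall>k<n. 0 \<le> ds k \<and> ds k < int p" unfolding ds_def using digit_bounds[OF p0] by blast
  have le: "\<forall>k<n. ds k \<le> dx k" using pr unfolding preceq_def dx_def ds_def by blast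
  have bey: "\<forall>k<n. 0 \<le> ey k \<and> ey k < int p" unfolding ey_def using bx bs' le by fastforce
  have bez: "\<forall>k<n. 0 \<le> ez k \<and> ez k < int p" unfolding ez_def using bx by fastforce
  have bone: "\<forall>k<n. 0 \<le> one k \<and> one k < int p" unfolding one_def using p0 by simp
  have xV: "x = (\<Sum>k<n. dx k * int p ^ k)" unfolding dx_def using decomp[OF p0 x] .
  have sV: "s = (\<Sum>k<n. ds k * int p ^ k)" unfolding ds_def using decomp[OF p0 s] .
  have PV: "int p ^ n - 1 = (\<Sum>k<n. one k * int p ^ k)" unfolding one_def using geom[of p n] by simp
  have yV: "int p ^ n - 1 + s - x = (\<Sum>k<n. ey k * int p ^ k)"
    unfolding PV sV xV ey_def by (simp add: algebra_simps sum.distrib sum_subtractf one_def)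
  have zV: "int p ^ n - 1 + s - x - s = (\<Sum>k<n. ez k * int p ^ k)"
    unfolding PV xV ez_def by (simp add: algebra_simps sum.distrib sum_subtractf one_def)
  have Sy: "0 \<le> int p ^ n - 1 + s - x \<and> int p ^ n - 1 + s - x < int p ^ n
    \<and> (\<forall>j<n. digit p j (int p ^ n - 1 + s - x) = ey j)"
    unfolding yV using sum_digits[OF p0 bey] .
  have pry: "preceq p n s (int p ^ n - 1 + s - x)"
    unfolding preceq_def using Sy bx unfolding ey_def ds_def by simp
  have fy: "frakb p n bs (int p ^ n - 1 + s - x) = (\<Sum>k<n. ey k * int p ^ k * bs (n - k))"
    unfolding yV by (rule frakb_V'[OF p0 bey])
  have fz: "frakb p n bs (int p ^ n - 1 + s - x - s) = (\<Sum>k<n. ez k * int p ^ k * bs (n - k))"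
    unfolding zV by (rule frakb_V'[OF p0 bez])
  have fx: "frakb p n bs x = (\<Sum>k<n. dx k * int p ^ k * bs (n - k))"
    by (subst xV) (rule frakb_V'[OF p0 bx])
  have fs: "frakb p n bs s = (\<Sum>k<n. ds k * int p ^ k * bs (n - k))"
    by (subst sV) (rule frakb_V'[OF p0 bs'])
  have fP: "frakb p n bs (int p ^ n - 1) = (\<Sum>k<n. one k * int p ^ k * bs (n - k))"
    by (subst PV) (rule frakb_V'[OF p0 bone])
  have e1: "frakb p n bs (int p ^ n - 1 + s - x) = frakb p n bs s + frakb p n bs (int p ^ n - 1) - frakb p n bs x"
    unfolding fy fs fP fx ey_def by (simp add: algebra_simps sum.distrib sum_subtractf one_def)
  have e2: "frakb p n bs (int p ^ n - 1 + s - x - s) = frakb p n bs (int p ^ n - 1) - frakb p n bs x"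
    unfolding fz fP fx ez_def by (simp add: algebra_simps sum.distrib sum_subtractf one_def)
  show ?thesis using Sy pry e1 e2 by blast
qed


theorem lemma3p8:
  fixes p n :: nat and bs :: "nat \<Rightarrow> int" and h s :: int
  assumes "prime p" and "n \<ge> 1"
    and "\<forall>i\<in>{1..n}. coprime (bs i) (int p)"
    and "0 \<le> s" and "s < (int p) ^ n"
  shows "bij_betw (\<lambda>t. (int p) ^ n - 1 + s - fraka p n bs t)
           {t. h \<le> t \<and> t < h + (int p) ^ n \<and> preceq p n s (fraka p n bs t)}
           {u. 0 \<le> u \<and> u < (int p) ^ n \<and> preceq p n s u}
       \<and> (\<forall>u. 0 \<le> u \<and> u < (int p) ^ n \<and> preceq p n s u \<longrightarrow>
             (let t = HH p n bs h (u - s) (belt p n bs h) in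
               h \<le> t \<and> t < h + (int p) ^ n \<and> preceq p n s (fraka p n bs t)
               \<and> u + fraka p n bs t = (int p) ^ n - 1 + s))
       \<and> (\<forall>t u. h \<le> t \<and> t < h + (int p) ^ n \<and> preceq p n s (fraka p n bs t)
             \<and> u = (int p) ^ n - 1 + s - fraka p n bs t \<longrightarrow>
             HH p n bs h s t = HH p n bs h u (belt p n bs h)
             \<and> DD p n bs h s t = dd p n bs h u - dd p n bs h (u - s))"
proof -
  note pr = assms(1) and cop = assms(3)
  have p0: "p > 0" using pr prime_gt_0_nat by auto
  have P0: "int p ^ n > 0" using p0 by simp
  define b where "b = belt p n bs h"
  have bp: "h \<le> b" "b < h + int p ^ n" "fraka p n bs b = int p ^ n - 1"
    using belt_prop[OF pr cop, of h] unfolding b_def by auto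
  have cb: "[frakb p n bs (int p ^ n - 1) = - b] (mod int p ^ n)"
    using fraka_prop[OF pr cop, of b] bp(3) by simp
  then have db: "int p ^ n dvd frakb p n bs (int p ^ n - 1) + b"
    by (simp add: cong_iff_dvd_diff)
  have C2: "\<forall>u. 0 \<le> u \<and> u < (int p) ^ n \<and> preceq p n s u \<longrightarrow>
             (let t = HH p n bs h (u - s) (belt p n bs h) in
               h \<le> t \<and> t < h + (int p) ^ n \<and> preceq p n s (fraka p n bs t)
               \<and> u + fraka p n bs t = (int p) ^ n - 1 + s)"
  proof (intro allI impI)
    fix u assume u: "0 \<le> u \<and> u < (int p) ^ n \<and> preceq p n s u"
    define a where "a = int p ^ n - 1 + s - u"
    have sa: "0 \<le> a" "a < int p ^ n" "preceq p n s a"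
      using SYM[OF p0, of u n s bs] u assms(4,5) unfolding a_def by auto
    have ua: "int p ^ n - 1 + s - a = u" unfolding a_def by simp
    have fus: "frakb p n bs (u - s) = frakb p n bs (int p ^ n - 1) - frakb p n bs a"
      using SYM[OF p0 sa(1,2) assms(4,5) sa(3), of bs] unfolding ua by simp
    define X where "X = frakb p n bs (u - s) + b - h"
    define t where "t = HH p n bs h (u - s) (belt p n bs h)"
    have t: "t = h + X mod int p ^ n" unfolding t_def HH_def X_def b_def ..
    have tw: "h \<le> t" "t < h + int p ^ n" unfolding t using P0 by simp_all
    have "X mod int p ^ n = X - X div int p ^ n * int p ^ n" by (simp add: minus_div_mult_eq_mod)
    then have "frakb p n bs a + t = (frakb p n bs (int p ^ n - 1) + b) - X div int p ^ n * int p ^ n"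
      unfolding t X_def fus by simp
    then have "int p ^ n dvd frakb p n bs a - (- t)" using db by simp
    then have "[frakb p n bs a = - t] (mod int p ^ n)" by (simp add: cong_iff_dvd_diff)
    then have fa: "fraka p n bs t = a" using fraka_unique[OF pr cop sa(1,2)] by blast
    show "let t = HH p n bs h (u - s) (belt p n bs h) in
               h \<le> t \<and> t < h + (int p) ^ n \<and> preceq p n s (fraka p n bs t)
               \<and> u + fraka p n bs t = (int p) ^ n - 1 + s"
      unfolding t_def[symmetric] Let_def using tw fa sa(3) unfolding a_def by simp
  qed
  have C3: "\<forall>t u. h \<le> t \<and> t < h + (int p) ^ n \<and> preceq p n s (fraka p n bs t)
             \<and> u = (int p) ^ n - 1 + s - fraka p n bs t \<longrightarrow>
             HH p n bs h s t = HH p n bs h u (belt p n bs h)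
             \<and> DD p n bs h s t = dd p n bs h u - dd p n bs h (u - s)"
  proof (intro allI impI)
    fix t u assume tu: "h \<le> t \<and> t < h + (int p) ^ n \<and> preceq p n s (fraka p n bs t)
             \<and> u = (int p) ^ n - 1 + s - fraka p n bs t"
    define a where "a = fraka p n bs t"
    have fa: "0 \<le> a" "a < int p ^ n" "[frakb p n bs a = - t] (mod int p ^ n)"
      using fraka_prop[OF pr cop, of t] unfolding a_def by auto
    have u: "u = int p ^ n - 1 + s - a" using tu unfolding a_def by simp
    have S: "frakb p n bs u = frakb p n bs s + frakb p n bs (int p ^ n - 1) - frakb p n bs a"
         "frakb p n bs (u - s) = frakb p n bs (int p ^ n - 1) - frakb p n bs a"
      using SYM[OF p0 fa(1,2) assms(4,5), of bs] tu unfolding u a_def by auto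
    have "int p ^ n dvd frakb p n bs a + t" using fa(3) by (simp add: cong_iff_dvd_diff)
    then have "int p ^ n dvd (frakb p n bs (int p ^ n - 1) + b) - (frakb p n bs a + t)"
      using db by (rule dvd_diff[rotated])
    then obtain k where k: "frakb p n bs (int p ^ n - 1) + b - frakb p n bs a - t = k * int p ^ n"
      by (auto simp: dvd_def algebra_simps)
    have e1: "frakb p n bs u + b - h = (frakb p n bs s + t - h) + k * int p ^ n"
      using k S(1) by simp
    have e2: "frakb p n bs (u - s) + b - h = (t - h) + k * int p ^ n"
      using k S(2) by simp
    have H: "HH p n bs h s t = HH p n bs h u (belt p n bs h)"
      unfolding HH_def b_def[symmetric] e1 by simp
    have d1: "dd p n bs h u = DD p n bs h s t + k"
      unfolding dd_def DD_def b_def[symmetric] e1 using P0 by simp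
    have "(t - h) div int p ^ n = 0" using tu by (simp add: div_pos_pos_trivial)
    then have d2: "dd p n bs h (u - s) = k"
      unfolding dd_def DD_def b_def[symmetric] e2 using P0 by simp
    show "HH p n bs h s t = HH p n bs h u (belt p n bs h)
             \<and> DD p n bs h s t = dd p n bs h u - dd p n bs h (u - s)"
      using H d1 d2 by simp
  qed
  have B: "bij_betw (\<lambda>t. (int p) ^ n - 1 + s - fraka p n bs t)
           {t. h \<le> t \<and> t < h + (int p) ^ n \<and> preceq p n s (fraka p n bs t)}
           {u. 0 \<le> u \<and> u < (int p) ^ n \<and> preceq p n s u}"
    unfolding bij_betw_def
  proof (intro conjI)
    show "inj_on (\<lambda>t. (int p) ^ n - 1 + s - fraka p n bs t)
           {t. h \<le> t \<and> t < h + (int p) ^ n \<and> preceq p n s (fraka p n bs t)}"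
    proof (rule inj_onI)
      fix t1 t2 assume t1: "t1 \<in> {t. h \<le> t \<and> t < h + (int p) ^ n \<and> preceq p n s (fraka p n bs t)}"
        and t2: "t2 \<in> {t. h \<le> t \<and> t < h + (int p) ^ n \<and> preceq p n s (fraka p n bs t)}"
        and eq: "(int p) ^ n - 1 + s - fraka p n bs t1 = (int p) ^ n - 1 + s - fraka p n bs t2"
      have "fraka p n bs t1 = fraka p n bs t2" using eq by simp
      then have "[- t1 = - t2] (mod int p ^ n)"
        using fraka_prop[OF pr cop, of t1] fraka_prop[OF pr cop, of t2] by (metis cong_sym cong_trans)
      then have "[t1 = t2] (mod int p ^ n)" by (simp add: cong_minus_minus_iff)
      then show "t1 = t2" using window_eq[of h t1 "int p ^ n" t2] t1 t2 by simp
    qed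
  next
    show "(\<lambda>t. (int p) ^ n - 1 + s - fraka p n bs t) `
           {t. h \<le> t \<and> t < h + (int p) ^ n \<and> preceq p n s (fraka p n bs t)} =
           {u. 0 \<le> u \<and> u < (int p) ^ n \<and> preceq p n s u}"
    proof (intro equalityI subsetI)
      fix u assume "u \<in> (\<lambda>t. (int p) ^ n - 1 + s - fraka p n bs t) `
           {t. h \<le> t \<and> t < h + (int p) ^ n \<and> preceq p n s (fraka p n bs t)}"
      then obtain t where t: "h \<le> t" "t < h + (int p) ^ n" "preceq p n s (fraka p n bs t)"
        and ut: "u = (int p) ^ n - 1 + s - fraka p n bs t" by auto
      have "0 \<le> fraka p n bs t" "fraka p n bs t < int p ^ n" using fraka_prop[OF pr cop, of t] by auto
      then show "u \<in> {u. 0 \<le> u \<and> u < (int p) ^ n \<and> preceq p n s u}"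
        using SYM[OF p0 _ _ assms(4,5) t(3), of bs] unfolding ut by auto
    next
      fix u assume "u \<in> {u. 0 \<le> u \<and> u < (int p) ^ n \<and> preceq p n s u}"
      then have "let t = HH p n bs h (u - s) (belt p n bs h) in
               h \<le> t \<and> t < h + (int p) ^ n \<and> preceq p n s (fraka p n bs t)
               \<and> u + fraka p n bs t = (int p) ^ n - 1 + s" using C2 by blast
      then obtain t where "h \<le> t \<and> t < h + (int p) ^ n \<and> preceq p n s (fraka p n bs t)"
               "u + fraka p n bs t = (int p) ^ n - 1 + s" unfolding Let_def by blast
      then show "u \<in> (\<lambda>t. (int p) ^ n - 1 + s - fraka p n bs t) `
           {t. h \<le> t \<and> t < h + (int p) ^ n \<and> preceq p n s (fraka p n bs t)}"
        by (intro image_eqI[of _ _ t]) auto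
    qed
  qed
  show ?thesis using B C2 C3 by blast
qed

end
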